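(* Let $n\geq1$, $m\geq0$, and let $(v=v^0\sim v^1\sim\dots\sim v^d=u)$ be a geodesic (shortest path) in the dYoke graph $Z_{n,m}$. Then for every $0\leq i\leq m$, all steps of this path that are shifts at $i$ are shifts in the same direction (all left shifts at $i$ or all right shifts at $i$).
   Context: Elements of $\mathbb{Z}_n$ are identified with representatives in $\{0,\dots,n-1\}$. $Z_{n,m}$ has vertices $u=(u_0,\dots,u_{m+1})\in\mathbb{Z}_n\times\{-1,0,1\}^m\times\mathbb{Z}_n$ with $\sum u_i\equiv0\pmod n$. A step from $v$ to $u$ is a left shift at $i$ ($0\le i\le m$) if $u_j=v_j$ for $j\notin\{i,i+1\}$, $u_i=v_i+1$ and $u_{i+1}=v_{i+1}-1$ (a unit moved from entry $i+1$ to entry $i$), and a right shift at $i$ if $u_i=v_i-1$, $u_{i+1}=v_{i+1}+1$; arithmetic in coordinates $0,m+1$ is in $\mathbb{Z}_n$, in coordinates $1,\dots,m$ in $\mathbb{Z}$ (values must remain in $\{-1,0,1\}$). Two vertices are adjacent iff one is obtained from the other by such a shift. *)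

theory Defs
  imports Main
begin

text \<open>Vertices of the dYoke graph Z_{n,m} are encoded as functions u :: nat => int,
  with entries u 0, ..., u (m+1) meaningful and all other entries equal to 0.
  Coordinates 0 and m+1 are representatives in {0..n-1} of Z_n,
  coordinates 1..m lie in {-1,0,1}.\<close>

definition zvert :: "nat \<Rightarrow> nat \<Rightarrow> (nat \<Rightarrow> int) \<Rightarrow> bool" where
  "zvert n m u \<longleftrightarrow>
     0 \<le> u 0 \<and> u 0 < int n \<and> 0 \<le> u (m+1) \<and> u (m+1) < int n
   \<and> (\<forall>j\<in>{1..m}. u j \<in> {-1, 0, 1})
   \<and> (\<forall>j>m+1. u j = 0)
   \<and> (\<Sum>j\<le>m+1. u j) mod int n = 0"

definition zadd :: "nat \<Rightarrow> nat \<Rightarrow> nat \<Rightarrow> int \<Rightarrow> int \<Rightarrow> int" where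
  "zadd n m j a x = (if j = 0 \<or> j = m+1 then (a + x) mod int n else a + x)"

definition left_shift :: "nat \<Rightarrow> nat \<Rightarrow> nat \<Rightarrow> (nat \<Rightarrow> int) \<Rightarrow> (nat \<Rightarrow> int) \<Rightarrow> bool" where
  "left_shift n m i v u \<longleftrightarrow>
     i \<le> m \<and> zvert n m v \<and> zvert n m u
   \<and> (\<forall>j. j \<noteq> i \<and> j \<noteq> Suc i \<longrightarrow> u j = v j)
   \<and> u i = zadd n m i (v i) 1
   \<and> u (Suc i) = zadd n m (Suc i) (v (Suc i)) (-1)"

definition right_shift :: "nat \<Rightarrow> nat \<Rightarrow> nat \<Rightarrow> (nat \<Rightarrow> int) \<Rightarrow> (nat \<Rightarrow> int) \<Rightarrow> bool" where
  "right_shift n m i v u \<longleftrightarrow>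
     i \<le> m \<and> zvert n m v \<and> zvert n m u
   \<and> (\<forall>j. j \<noteq> i \<and> j \<noteq> Suc i \<longrightarrow> u j = v j)
   \<and> u i = zadd n m i (v i) (-1)
   \<and> u (Suc i) = zadd n m (Suc i) (v (Suc i)) 1"

definition zadj :: "nat \<Rightarrow> nat \<Rightarrow> (nat \<Rightarrow> int) \<Rightarrow> (nat \<Rightarrow> int) \<Rightarrow> bool" where
  "zadj n m v u \<longleftrightarrow> (\<exists>i\<le>m. left_shift n m i v u \<or> right_shift n m i v u)"

definition zwalk :: "nat \<Rightarrow> nat \<Rightarrow> (nat \<Rightarrow> nat \<Rightarrow> int) \<Rightarrow> nat \<Rightarrow> bool" where
  "zwalk n m p d \<longleftrightarrow> (\<forall>k\<le>d. zvert n m (p k)) \<and> (\<forall>k<d. zadj n m (p k) (p (Suc k)))"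

definition zgeodesic :: "nat \<Rightarrow> nat \<Rightarrow> (nat \<Rightarrow> nat \<Rightarrow> int) \<Rightarrow> nat \<Rightarrow> bool" where
  "zgeodesic n m p d \<longleftrightarrow> zwalk n m p d \<and>
     (\<forall>q d'. zwalk n m q d' \<and> q 0 = p 0 \<and> q d' = p d \<longrightarrow> d \<le> d')"

end

theory Submission
  imports Defs
begin

definition sh :: "nat \<Rightarrow> nat \<Rightarrow> nat \<Rightarrow> int \<Rightarrow> (nat \<Rightarrow> int) \<Rightarrow> (nat \<Rightarrow> int) \<Rightarrow> bool" where
  "sh n m i a v u \<longleftrightarrow> i \<le> m \<and> zvert n m v \<and> zvert n m u
   \<and> (\<forall>j. j \<noteq> i \<and> j \<noteq> Suc i \<longrightarrow> u j = v j)
   \<and> u i = zadd n m i (v i) a \<and> u (Suc i) = zadd n m (Suc i) (v (Suc i)) (-a)"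

lemma left_sh: "left_shift n m i v u = sh n m i 1 v u"
  unfolding left_shift_def sh_def by simp

lemma right_sh: "right_shift n m i v u = sh n m i (-1) v u"
  unfolding right_shift_def sh_def by simp

definition gm :: "nat \<Rightarrow> nat \<Rightarrow> nat \<Rightarrow> int \<Rightarrow> (nat \<Rightarrow> int) \<Rightarrow> (nat \<Rightarrow> int)" where
  "gm n m i a x = x(i := zadd n m i (x i) (-a), Suc i := zadd n m (Suc i) (x (Suc i)) a)"

lemma sh_zadj: "sh n m j b v u \<Longrightarrow> b = 1 \<or> b = -1 \<Longrightarrow> zadj n m v u"
  unfolding zadj_def left_sh right_sh by (auto simp: sh_def)

lemma gm_zvert:
  assumes n1: "n \<ge> 1" and xv: "zvert n m x" and im: "i \<le> m"
    and r1: "1 \<le> i \<Longrightarrow> x i - a \<in> {-1,0,1}"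
    and r2: "Suc i \<le> m \<Longrightarrow> x (Suc i) + a \<in> {-1,0,1}"
  shows "zvert n m (gm n m i a x)"
proof -
  let ?y = "gm n m i a x"
  let ?c = "\<lambda>j. (if j = Suc i then a else 0) - (if j = i then a else (0::int))"
  have ym: "?y j mod int n = (x j + ?c j) mod int n" for j
    by (auto simp: gm_def zadd_def)
  have "(\<Sum>j\<le>m+1. ?y j) mod int n = (\<Sum>j\<le>m+1. ?y j mod int n) mod int n"
    by (rule mod_sum_eq[symmetric])
  also have "\<dots> = (\<Sum>j\<le>m+1. (x j + ?c j) mod int n) mod int n" using ym by simp
  also have "\<dots> = (\<Sum>j\<le>m+1. (x j + ?c j)) mod int n" by (rule mod_sum_eq)
  also have "(\<Sum>j\<le>m+1. (x j + ?c j)) = (\<Sum>j\<le>m+1. x j) + (\<Sum>j\<le>m+1. ?c j)"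
    by (rule sum.distrib)
  also have "(\<Sum>j\<le>m+1. ?c j) = 0"
    using im by (simp add: sum_subtractf)
  finally have sum: "(\<Sum>j\<le>m+1. ?y j) mod int n = 0" using xv by (simp add: zvert_def)
  have np: "int n > 0" using n1 by simp
  show ?thesis
    unfolding zvert_def
  proof (intro conjI)
    show "0 \<le> ?y 0" "?y 0 < int n" using xv np by (auto simp: gm_def zadd_def zvert_def)
    show "0 \<le> ?y (m+1)" "?y (m+1) < int n" using xv np im by (auto simp: gm_def zadd_def zvert_def)
    show "\<forall>j\<in>{1..m}. ?y j \<in> {- 1, 0, 1}" using xv im r1 r2 by (auto simp: gm_def zadd_def zvert_def)
    show "\<forall>j>m + 1. ?y j = 0" using xv im by (auto simp: gm_def zvert_def)
    show "(\<Sum>j\<le>m+1. ?y j) mod int n = 0" by (rule sum)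
  qed
qed

lemma exch:
  assumes "sh n m j b x y" "j \<noteq> i" "i \<le> m" "zvert n m (gm n m i a x)" "zvert n m (gm n m i a y)"
  shows "sh n m j b (gm n m i a x) (gm n m i a y)"
  using assms unfolding sh_def gm_def zadd_def by auto

lemma zadd_inv:
  assumes "zvert n m x" "c \<le> m+1"
  shows "zadd n m c (zadd n m c (x c) e) (-e) = x c"
proof (cases "c = 0 \<or> c = m+1")
  case True
  then have "0 \<le> x c \<and> x c < int n" using assms by (auto simp: zvert_def)
  then show ?thesis using True by (simp add: zadd_def mod_diff_left_eq)
next
  case False then show ?thesis by (simp add: zadd_def)
qed

lemma crossing: "P lo \<Longrightarrow> \<not> P hi \<Longrightarrow> lo \<le> hi \<Longrightarrow> \<exists>r. lo \<le> r \<and> r < hi \<and> P r \<and> \<not> P (Suc r)"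
proof (induction hi)
  case 0 then show ?case by auto
next
  case (Suc h)
  have "lo \<noteq> Suc h" using Suc.prems by auto
  then have lh: "lo \<le> h" using Suc.prems by auto
  show ?case
  proof (cases "P h")
    case True then show ?thesis using Suc.prems lh by (intro exI[of _ h]) auto
  next
    case False then show ?thesis using Suc.IH Suc.prems lh less_SucI by blast
  qed
qed


lemma shc1: "sh n m j b v u \<Longrightarrow> 1 \<le> j \<Longrightarrow> u j = v j + b"
  by (auto simp: sh_def zadd_def)

lemma shc2: "sh n m j b v u \<Longrightarrow> Suc j \<le> m \<Longrightarrow> u (Suc j) = v (Suc j) - b"
  by (auto simp: sh_def zadd_def)

lemma unch: "sh n m j b v u \<Longrightarrow> c \<noteq> j \<Longrightarrow> c \<noteq> Suc j \<Longrightarrow> u c = v c"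
  by (auto simp: sh_def)

lemma core:
  fixes p :: "nat \<Rightarrow> nat \<Rightarrow> int"
  assumes n1: "n \<ge> 1" and walk: "zwalk n m p d" and im: "i \<le> m" and a: "a = 1 \<or> a = -1"
    and st: "s < t" "t < d"
    and shs: "sh n m i a (p s) (p (Suc s))" and sht: "sh n m i (-a) (p t) (p (Suc t))"
    and mini: "\<And>j b s' t'. j \<le> m \<Longrightarrow> b = 1 \<or> b = -1 \<Longrightarrow> s \<le> s' \<Longrightarrow> s' < t' \<Longrightarrow> t' \<le> t
       \<Longrightarrow> (s' \<noteq> s \<or> t' \<noteq> t) \<Longrightarrow> sh n m j b (p s') (p (Suc s'))
       \<Longrightarrow> sh n m j (-b) (p t') (p (Suc t')) \<Longrightarrow> False"
  shows "\<exists>w. zwalk n m w (d-2) \<and> w 0 = p 0 \<and> w (d-2) = p d"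
proof -
  have V: "\<And>r. r \<le> d \<Longrightarrow> zvert n m (p r)" using walk by (simp add: zwalk_def)
  have A: "\<exists>j b. j \<le> m \<and> (b = 1 \<or> b = -1) \<and> sh n m j b (p r) (p (Suc r))" if "r < d" for r
  proof -
    from walk that obtain j where "j \<le> m" "left_shift n m j (p r) (p (Suc r)) \<or> right_shift n m j (p r) (p (Suc r))"
      unfolding zwalk_def zadj_def by blast
    then show ?thesis unfolding left_sh right_sh by blast
  qed
  have B: "\<not> sh n m i b (p r) (p (Suc r))" if "s < r" "r < t" "b = 1 \<or> b = -1" for r b
  proof
    assume h: "sh n m i b (p r) (p (Suc r))"
    show False
    proof (cases "b = a")
      case True then show False using mini[of i a r t] h sht im a that by auto
    next
      case False then have "b = -a" using a that by auto
      then show False using mini[of i a s r] h shs im a that by auto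
    qed
  qed
  have rng: "\<And>r c. r \<le> d \<Longrightarrow> 1 \<le> c \<Longrightarrow> c \<le> m \<Longrightarrow> p r c \<in> {-1,0,1}"
    using V by (auto simp: zvert_def)
  have C1: "p r i \<noteq> -a" if i1: "1 \<le> i" and r: "s < r" "r \<le> t" for r
  proof
    assume bad: "p r i = -a"
    have e1: "p (Suc s) i \<noteq> -a"
      using shc1[OF shs i1] rng[of s i] rng[of "Suc s" i] st im i1 a by auto
    have e2: "p t i \<noteq> -a"
      using shc1[OF sht i1] rng[of t i] rng[of "Suc t" i] st im i1 a by auto
    have rs: "Suc s \<le> r" using r by auto
    obtain r1 where r1: "Suc s \<le> r1" "r1 < r" "p r1 i \<noteq> -a" "p (Suc r1) i = -a"
      using crossing[of "\<lambda>r. p r i \<noteq> -a" "Suc s" r] e1 bad rs by auto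
    obtain r2 where r2: "r \<le> r2" "r2 < t" "p r2 i = -a" "p (Suc r2) i \<noteq> -a"
      using crossing[of "\<lambda>r. p r i = -a" r t] e2 bad r by auto
    obtain j b where jb: "j \<le> m" "b = 1 \<or> b = -1" "sh n m j b (p r1) (p (Suc r1))"
      using A[of r1] r1 r st by auto
    have "j \<noteq> i" using B[of r1 b] jb r1 r by auto
    then have ji: "Suc j = i" using unch[OF jb(3), of i] r1 by auto
    have "p (Suc r1) i = p r1 i - b" using shc2[OF jb(3)] ji im by auto
    then have ba: "b = a" using rng[of r1 i] r1 r st i1 im a jb(2) by auto
    obtain j2 b2 where jb2: "j2 \<le> m" "b2 = 1 \<or> b2 = -1" "sh n m j2 b2 (p r2) (p (Suc r2))"
      using A[of r2] r2 st by auto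
    have "j2 \<noteq> i" using B[of r2 b2] jb2 r2 r by auto
    then have ji2: "Suc j2 = i" using unch[OF jb2(3), of i] r2 by auto
    have "p (Suc r2) i = p r2 i - b2" using shc2[OF jb2(3)] ji2 im by auto
    then have ba2: "b2 = -a" using rng[of "Suc r2" i] r2 r st i1 im a jb2(2) by auto
    show False using mini[of j a r1 r2] jb jb2 ba ba2 ji ji2 r1 r2 a by auto
  qed
  have C2: "p r (Suc i) \<noteq> a" if i1: "Suc i \<le> m" and r: "s < r" "r \<le> t" for r
  proof
    assume bad: "p r (Suc i) = a"
    have e1: "p (Suc s) (Suc i) \<noteq> a"
      using shc2[OF shs i1] rng[of s "Suc i"] rng[of "Suc s" "Suc i"] st i1 a by auto
    have e2: "p t (Suc i) \<noteq> a"
      using shc2[OF sht i1] rng[of t "Suc i"] rng[of "Suc t" "Suc i"] st i1 a by (cases "a = 1") auto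
    have rs: "Suc s \<le> r" using r by auto
    obtain r1 where r1: "Suc s \<le> r1" "r1 < r" "p r1 (Suc i) \<noteq> a" "p (Suc r1) (Suc i) = a"
      using crossing[of "\<lambda>r. p r (Suc i) \<noteq> a" "Suc s" r] e1 bad rs by auto
    obtain r2 where r2: "r \<le> r2" "r2 < t" "p r2 (Suc i) = a" "p (Suc r2) (Suc i) \<noteq> a"
      using crossing[of "\<lambda>r. p r (Suc i) = a" r t] e2 bad r by auto
    obtain j b where jb: "j \<le> m" "b = 1 \<or> b = -1" "sh n m j b (p r1) (p (Suc r1))"
      using A[of r1] r1 r st by auto
    have "j \<noteq> i" using B[of r1 b] jb r1 r by auto
    then have ji: "j = Suc i" using unch[OF jb(3), of "Suc i"] r1 by auto
    have "p (Suc r1) (Suc i) = p r1 (Suc i) + b" using shc1[OF jb(3)] ji by auto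
    then have ba: "b = a" using rng[of r1 "Suc i"] r1 r st i1 a jb(2) by auto
    obtain j2 b2 where jb2: "j2 \<le> m" "b2 = 1 \<or> b2 = -1" "sh n m j2 b2 (p r2) (p (Suc r2))"
      using A[of r2] r2 st by auto
    have "j2 \<noteq> i" using B[of r2 b2] jb2 r2 r by auto
    then have ji2: "j2 = Suc i" using unch[OF jb2(3), of "Suc i"] r2 by auto
    have "p (Suc r2) (Suc i) = p r2 (Suc i) + b2" using shc1[OF jb2(3)] ji2 by auto
    then have ba2: "b2 = -a" using rng[of "Suc r2" "Suc i"] r2 r st i1 a jb2(2) by auto
    show False using mini[of "Suc i" a r1 r2] jb jb2 ba ba2 ji ji2 r1 r2 a i1 by auto
  qed
  have D: "zvert n m (gm n m i a (p r))" if "s < r" "r \<le> t" for r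
  proof (rule gm_zvert[OF n1 V[of r] im])
    show "r \<le> d" using that st by auto
    show "p r i - a \<in> {-1,0,1}" if "1 \<le> i"
      using C1[OF that] \<open>s < r\<close> \<open>r \<le> t\<close> rng[of r i] \<open>1 \<le> i\<close> im st a by auto
    show "p r (Suc i) + a \<in> {-1,0,1}" if "Suc i \<le> m"
      using C2[OF that] \<open>s < r\<close> \<open>r \<le> t\<close> rng[of r "Suc i"] that st a by auto
  qed
  have E1: "gm n m i a (p (Suc s)) = p s"
  proof
    fix c
    have vs: "zvert n m (p s)" using V st by auto
    show "gm n m i a (p (Suc s)) c = p s c"
      using shs zadd_inv[OF vs, of i a] zadd_inv[OF vs, of "Suc i" "-a"] im
      unfolding sh_def gm_def by auto
  qed
  have E2: "gm n m i a (p t) = p (Suc t)"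
  proof
    fix c
    show "gm n m i a (p t) c = p (Suc t) c"
      using sht unfolding sh_def gm_def by auto
  qed
  define w where "w r = (if r < s then p r else if r < t then gm n m i a (p (Suc r)) else p (Suc (Suc r)))" for r
  have W1: "zvert n m (w r)" if "r \<le> d - 2" for r
    using that D[of "Suc r"] V[of r] V[of "Suc (Suc r)"] st unfolding w_def by auto
  have W2: "zadj n m (w r) (w (Suc r))" if "r < d - 2" for r
  proof -
    have adj: "\<And>k. k < d \<Longrightarrow> zadj n m (p k) (p (Suc k))" using walk by (simp add: zwalk_def)
    consider "Suc r < s" | "Suc r = s" | "s \<le> r \<and> Suc r < t" | "Suc r = t" | "t \<le> r" by linarith
    then show ?thesis
    proof cases
      case 1 then show ?thesis using adj[of r] st unfolding w_def by auto
    next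
      case 2 then show ?thesis using adj[of r] st E1 unfolding w_def by auto
    next
      case 3
      obtain j b where jb: "j \<le> m" "b = 1 \<or> b = -1" "sh n m j b (p (Suc r)) (p (Suc (Suc r)))"
        using A[of "Suc r"] 3 st by auto
      have "j \<noteq> i" using B[of "Suc r" b] jb 3 by auto
      then have "sh n m j b (gm n m i a (p (Suc r))) (gm n m i a (p (Suc (Suc r))))"
        using exch[OF jb(3) _ im D[of "Suc r"] D[of "Suc (Suc r)"]] 3 by auto
      then show ?thesis using 3 sh_zadj jb(2) unfolding w_def by auto
    next
      case 4 then show ?thesis using adj[of "Suc t"] that E2 st unfolding w_def by auto
    next
      case 5 then show ?thesis using adj[of "Suc (Suc r)"] that st unfolding w_def by auto
    qed
  qed
  have "w 0 = p 0" using E1 st unfolding w_def by auto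
  moreover have "w (d-2) = p d"
  proof (cases "d - 2 < t")
    case True then have "d - 2 = t - 1" "Suc t = d" using st by auto
    then show ?thesis using E2 st unfolding w_def by auto
  next
    case False
    then have "Suc (Suc (d - 2)) = d" using st by auto
    then show ?thesis using False st unfolding w_def by auto
  qed
  moreover have "zwalk n m w (d-2)" using W1 W2 by (simp add: zwalk_def)
  ultimately show ?thesis by blast
qed


theorem lemma3p2:
  fixes n m d :: nat and p :: "nat \<Rightarrow> nat \<Rightarrow> int"
  assumes "n \<ge> 1"
    and "zgeodesic n m p d"
  shows "\<forall>i\<le>m.
     (\<forall>k<d. left_shift n m i (p k) (p (Suc k)) \<or> right_shift n m i (p k) (p (Suc k))
             \<longrightarrow> left_shift n m i (p k) (p (Suc k)))
   \<or> (\<forall>k<d. left_shift n m i (p k) (p (Suc k)) \<or> right_shift n m i (p k) (p (Suc k))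
             \<longrightarrow> right_shift n m i (p k) (p (Suc k)))"
proof (rule ccontr)
  assume "\<not> ?thesis"
  then obtain i k1 k2 where ik: "i \<le> m" "k1 < d" "k2 < d"
    "sh n m i (-1) (p k1) (p (Suc k1))" "\<not> sh n m i 1 (p k1) (p (Suc k1))"
    "sh n m i 1 (p k2) (p (Suc k2))" "\<not> sh n m i (-1) (p k2) (p (Suc k2))"
    unfolding left_sh right_sh by blast
  define Q where "Q \<delta> = (\<exists>j b s t. j \<le> m \<and> (b = 1 \<or> b = -1) \<and> s < t \<and> t < d
      \<and> sh n m j b (p s) (p (Suc s)) \<and> sh n m j (-b) (p t) (p (Suc t)) \<and> t - s = \<delta>)" for \<delta>
  have "\<exists>\<delta>. Q \<delta>"
  proof (cases "k2 < k1")
    case True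
    have "Q (k1 - k2)" unfolding Q_def
      by (rule exI[of _ i], rule exI[of _ 1], rule exI[of _ k2], rule exI[of _ k1]) (use ik True in simp)
    then show ?thesis by blast
  next
    case False
    then have "k1 < k2" using ik by (metis linorder_neqE_nat)
    have "Q (k2 - k1)" unfolding Q_def
      by (rule exI[of _ i], rule exI[of _ "-1"], rule exI[of _ k1], rule exI[of _ k2]) (use ik \<open>k1 < k2\<close> in simp)
    then show ?thesis by blast
  qed
  then obtain \<delta> where Qd: "Q \<delta>" and lst: "\<forall>\<delta>'<\<delta>. \<not> Q \<delta>'" using exists_least_iff by blast
  then obtain j b s t where jb: "j \<le> m" "b = 1 \<or> b = -1" "s < t" "t < d"
    "sh n m j b (p s) (p (Suc s))" "sh n m j (-b) (p t) (p (Suc t))" "t - s = \<delta>"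
    unfolding Q_def by blast
  have walk: "zwalk n m p d" using assms(2) by (simp add: zgeodesic_def)
  have "\<exists>w. zwalk n m w (d-2) \<and> w 0 = p 0 \<and> w (d-2) = p d"
  proof (rule core[OF assms(1) walk jb(1,2,3,4,5,6)])
    fix j' b' s' t'
    assume h: "j' \<le> m" "b' = 1 \<or> b' = -1" "s \<le> s'" "s' < t'" "t' \<le> t" "s' \<noteq> s \<or> t' \<noteq> t"
      "sh n m j' b' (p s') (p (Suc s'))" "sh n m j' (-b') (p t') (p (Suc t'))"
    have "Q (t' - s')" unfolding Q_def by (rule exI[of _ j'], rule exI[of _ b'], rule exI[of _ s'], rule exI[of _ t']) (use h jb in simp)
    moreover have "t' - s' < \<delta>" using h(3,4,5,6) jb(7) by linarith
    ultimately show False using lst by auto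
  qed
  then obtain w where "zwalk n m w (d-2)" "w 0 = p 0" "w (d-2) = p d" by blast
  then have "d \<le> d - 2" using assms(2) unfolding zgeodesic_def by blast
  then show False using jb by auto
qed

end
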